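(* Let $\mathcal P$ be a projective plane of finite order $n$. Then $\mathcal P$ contains a Fano configuration (seven points and seven lines, each line containing exactly three of the points and each point on exactly three of the lines, i.e. a subplane of order $2$) if and only if $\mathcal P$ can be coordinatised (in the sense described in the context, with some labelling set $\mathcal R$ of cardinality $n$) in such a way that the resulting additive loop $(\mathcal R,\oplus)$ contains an involution, i.e. an element $t\neq 0$ with $t\oplus t=0$.
   Context: Coordinatisation of a projective plane $\mathcal P$ of order $n$: let $\mathcal R$ be a set of cardinality $n$ with two distinguished elements $0\neq 1$, and $\infty\notin\mathcal R$ a symbol. Choose a quadrangle $O,X,Y,I$ (four points, no three collinear). Label $O=(0,0)$, $X=(0)$, $Y=(\infty)$, $I=(1,1)$; set $[\infty]=\overline{XY}$, $[0]=\overline{OY}$, $[0,0]=\overline{OX}$. Set $(0,1)=\overline{XI}\cap[0]$, $(1,0)=\overline{YI}\cap[0,0]$, $J=(1)=\overline{(1,0)(0,1)}\cap[\infty]$. Label the remaining $n-2$ points of $[0]$ other than $O,Y,(0,1)$ as $(0,a)$, $a\in\mathcal R\setminus\{0,1\}$, arbitrarily. Then set $(a,0)=\overline{(0,a)J}\cap[0,0]$, $(a)=\overline{(0,a)(1,0)}\cap[\infty]$, $(a,b)=\overline{(a,0)Y}\cap\overline{(0,b)X}$, and label lines $[a]=\overline{(a,0)Y}$ and $[m,k]=\overline{(m)(0,k)}$. The planar ternary ring (PTR) is $T:\mathcal R^3\to\mathcal R$ with $T(m,x,y)=k$ iff $(x,y)\in[m,k]$. The additive loop is $x\oplus y=T(1,x,y)$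 (a loop on $\mathcal R$ with identity $0$) and the multiplicative loop is $x\odot y=T(x,y,0)$. *)

theory Defs
  imports Main
begin

definition collinear :: "('p \<Rightarrow> 'l \<Rightarrow> bool) \<Rightarrow> 'p \<Rightarrow> 'p \<Rightarrow> 'p \<Rightarrow> bool" where
  "collinear inc a b c \<longleftrightarrow> (\<exists>l. inc a l \<and> inc b l \<and> inc c l)"

definition quadrangle :: "('p \<Rightarrow> 'l \<Rightarrow> bool) \<Rightarrow> 'p \<Rightarrow> 'p \<Rightarrow> 'p \<Rightarrow> 'p \<Rightarrow> bool" where
  "quadrangle inc a b c d \<longleftrightarrow>
     a \<noteq> b \<and> a \<noteq> c \<and> a \<noteq> d \<and> b \<noteq> c \<and> b \<noteq> d \<and> c \<noteq> d \<and>
     \<not> collinear inc a b c \<and> \<not> collinear inc a b d \<and>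
     \<not> collinear inc a c d \<and> \<not> collinear inc b c d"

definition projective_plane :: "('p \<Rightarrow> 'l \<Rightarrow> bool) \<Rightarrow> bool" where
  "projective_plane inc \<longleftrightarrow>
     (\<forall>p q. p \<noteq> q \<longrightarrow> (\<exists>!l. inc p l \<and> inc q l)) \<and>
     (\<forall>l m. l \<noteq> m \<longrightarrow> (\<exists>!p. inc p l \<and> inc p m)) \<and>
     (\<exists>a b c d. quadrangle inc a b c d)"

definition projective_plane_of_order :: "('p \<Rightarrow> 'l \<Rightarrow> bool) \<Rightarrow> nat \<Rightarrow> bool" where
  "projective_plane_of_order inc n \<longleftrightarrow>
     projective_plane inc \<and> finite (UNIV :: 'p set) \<and> (\<forall>l. card {p. inc p l} = n + 1)"

definition has_fano :: "('p \<Rightarrow> 'l \<Rightarrow> bool) \<Rightarrow> bool" where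
  "has_fano inc \<longleftrightarrow> (\<exists>S T. card S = 7 \<and> card T = 7 \<and>
      (\<forall>l\<in>T. card {p\<in>S. inc p l} = 3) \<and> (\<forall>p\<in>S. card {l\<in>T. inc p l} = 3))"

definition join :: "('p \<Rightarrow> 'l \<Rightarrow> bool) \<Rightarrow> 'p \<Rightarrow> 'p \<Rightarrow> 'l" where
  "join inc p q = (THE l. inc p l \<and> inc q l)"

definition meet :: "('p \<Rightarrow> 'l \<Rightarrow> bool) \<Rightarrow> 'l \<Rightarrow> 'l \<Rightarrow> 'p" where
  "meet inc l m = (THE p. inc p l \<and> inc p m)"

text \<open>Coordinatisation data: labelling set R with distinguished elements zero, one;
  quadrangle Or, X, Y, E (E is the unit point I = (1,1)); lam a is the point (0,a) of [0] = OY.\<close>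
definition coordinatisation ::
  "('p \<Rightarrow> 'l \<Rightarrow> bool) \<Rightarrow> 'r set \<Rightarrow> 'r \<Rightarrow> 'r \<Rightarrow> 'p \<Rightarrow> 'p \<Rightarrow> 'p \<Rightarrow> 'p \<Rightarrow> ('r \<Rightarrow> 'p) \<Rightarrow> bool" where
  "coordinatisation inc R zero one Or X Y E lam \<longleftrightarrow>
     quadrangle inc Or X Y E \<and> zero \<in> R \<and> one \<in> R \<and> zero \<noteq> one \<and>
     bij_betw lam R ({p. inc p (join inc Or Y)} - {Y}) \<and>
     lam zero = Or \<and> lam one = meet inc (join inc X E) (join inc Or Y)"

definition pt10 :: "('p \<Rightarrow> 'l \<Rightarrow> bool) \<Rightarrow> 'p \<Rightarrow> 'p \<Rightarrow> 'p \<Rightarrow> 'p \<Rightarrow> 'p" where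
  "pt10 inc Or X Y E = meet inc (join inc Y E) (join inc Or X)"

definition ptJ :: "('p \<Rightarrow> 'l \<Rightarrow> bool) \<Rightarrow> 'r \<Rightarrow> 'p \<Rightarrow> 'p \<Rightarrow> 'p \<Rightarrow> 'p \<Rightarrow> ('r \<Rightarrow> 'p) \<Rightarrow> 'p" where
  "ptJ inc one Or X Y E lam =
     meet inc (join inc (pt10 inc Or X Y E) (lam one)) (join inc X Y)"

definition ptA0 :: "('p \<Rightarrow> 'l \<Rightarrow> bool) \<Rightarrow> 'r \<Rightarrow> 'p \<Rightarrow> 'p \<Rightarrow> 'p \<Rightarrow> 'p \<Rightarrow> ('r \<Rightarrow> 'p) \<Rightarrow> 'r \<Rightarrow> 'p" where
  "ptA0 inc one Or X Y E lam a =
     meet inc (join inc (lam a) (ptJ inc one Or X Y E lam)) (join inc Or X)"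

definition ptAB :: "('p \<Rightarrow> 'l \<Rightarrow> bool) \<Rightarrow> 'r \<Rightarrow> 'p \<Rightarrow> 'p \<Rightarrow> 'p \<Rightarrow> 'p \<Rightarrow> ('r \<Rightarrow> 'p) \<Rightarrow> 'r \<Rightarrow> 'r \<Rightarrow> 'p" where
  "ptAB inc one Or X Y E lam a b =
     meet inc (join inc (ptA0 inc one Or X Y E lam a) Y) (join inc (lam b) X)"

definition ptM :: "('p \<Rightarrow> 'l \<Rightarrow> bool) \<Rightarrow> 'p \<Rightarrow> 'p \<Rightarrow> 'p \<Rightarrow> 'p \<Rightarrow> ('r \<Rightarrow> 'p) \<Rightarrow> 'r \<Rightarrow> 'p" where
  "ptM inc Or X Y E lam m =
     meet inc (join inc (lam m) (pt10 inc Or X Y E)) (join inc X Y)"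

definition lineMK :: "('p \<Rightarrow> 'l \<Rightarrow> bool) \<Rightarrow> 'p \<Rightarrow> 'p \<Rightarrow> 'p \<Rightarrow> 'p \<Rightarrow> ('r \<Rightarrow> 'p) \<Rightarrow> 'r \<Rightarrow> 'r \<Rightarrow> 'l" where
  "lineMK inc Or X Y E lam m k = join inc (ptM inc Or X Y E lam m) (lam k)"

definition PTR :: "('p \<Rightarrow> 'l \<Rightarrow> bool) \<Rightarrow> 'r set \<Rightarrow> 'r \<Rightarrow> 'p \<Rightarrow> 'p \<Rightarrow> 'p \<Rightarrow> 'p \<Rightarrow> ('r \<Rightarrow> 'p)
    \<Rightarrow> 'r \<Rightarrow> 'r \<Rightarrow> 'r \<Rightarrow> 'r" where
  "PTR inc R one Or X Y E lam m x y =
     (THE k. k \<in> R \<and> inc (ptAB inc one Or X Y E lam x y) (lineMK inc Or X Y E lam m k))"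

definition coord_add :: "('p \<Rightarrow> 'l \<Rightarrow> bool) \<Rightarrow> 'r set \<Rightarrow> 'r \<Rightarrow> 'p \<Rightarrow> 'p \<Rightarrow> 'p \<Rightarrow> 'p \<Rightarrow> ('r \<Rightarrow> 'p)
    \<Rightarrow> 'r \<Rightarrow> 'r \<Rightarrow> 'r" where
  "coord_add inc R one Or X Y E lam x y = PTR inc R one Or X Y E lam one x y"

end

theory Submission
  imports Defs
begin

lemma filter_insert: "{p \<in> insert x A. P p} = (if P x then insert x {p\<in>A. P p} else {p\<in>A. P p})"
  by auto
lemma filter_empty: "{p \<in> {}. P p} = {}" by auto

lemma exists_lam:
  assumes fP: "finite P" and cP: "card P = n" and aP: "a \<in> P" and fP2: "f \<in> P" and af: "a \<noteq> f"
  shows "\<exists>lam. bij_betw lam {0..<n} P \<and> lam 0 = a \<and> lam (1::nat) = f"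
proof -
  define P' where "P' = P - {a,f}"
  have cP': "card P' = n - 2" unfolding P'_def using fP cP aP fP2 af
    by (subst card_Diff_subset) auto
  obtain h where h: "bij_betw h {0..<card P'} P'" using ex_bij_betw_nat_finite[of P'] fP P'_def by auto
  define lam where "lam i = (if i = 0 then a else if i = (1::nat) then f else h (i - 2))" for i
  have n2: "n \<ge> 2" using cP aP fP2 af fP
    by (metis card_2_iff card_mono empty_subsetI insert_subset)
  have hP: "k < n - 2 \<Longrightarrow> h k \<in> P'" for k using h cP' unfolding bij_betw_def by auto
  have hinj: "k < n - 2 \<Longrightarrow> j < n - 2 \<Longrightarrow> h k = h j \<Longrightarrow> k = j" for k j
    using h cP' unfolding bij_betw_def inj_on_def by auto
  have "inj_on lam {0..<n}"
  proof (rule inj_onI)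
    fix i j assume ij: "i \<in> {0..<n}" "j \<in> {0..<n}" "lam i = lam j"
    have ar: "2 \<le> k \<Longrightarrow> k < n \<Longrightarrow> k - 2 < n - 2" for k by auto
    have hj: "2 \<le> j \<Longrightarrow> h (j - 2) \<in> P'" using hP ar ij by auto
    have hi: "2 \<le> i \<Longrightarrow> h (i - 2) \<in> P'" using hP ar ij by auto
    show "i = j"
    proof (cases "i < 2")
      case True
      thus ?thesis using ij hj af unfolding lam_def P'_def by (auto split: if_splits)
    next
      case False
      thus ?thesis using ij hj hi hinj[of "i - 2" "j - 2"] ar af
        unfolding lam_def P'_def by (auto split: if_splits)
    qed
  qed
  moreover have "lam ` {0..<n} = P"
  proof
    show "lam ` {0..<n} \<subseteq> P" using hP aP fP2 unfolding lam_def P'_def by auto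
    show "P \<subseteq> lam ` {0..<n}"
    proof
      fix p assume p: "p \<in> P"
      show "p \<in> lam ` {0..<n}"
      proof (cases "p = a \<or> p = f")
        case True
        thus ?thesis using n2 unfolding lam_def by (auto simp: image_iff intro: bexI[of _ 0] bexI[of _ 1])
      next
        case False
        hence "p \<in> P'" using p unfolding P'_def by auto
        then obtain k where k: "k < n - 2" "h k = p" using h cP' unfolding bij_betw_def by auto
        hence "lam (k + 2) = p" unfolding lam_def by auto
        moreover have "k + 2 \<in> {0..<n}" using k by auto
        ultimately show ?thesis by blast
      qed
    qed
  qed
  moreover have "lam 0 = a" "lam 1 = f" unfolding lam_def by auto
  ultimately show ?thesis unfolding bij_betw_def by blast
qed

locale pplane =
  fixes inc :: "'p \<Rightarrow> 'l \<Rightarrow> bool"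
  assumes pp: "projective_plane inc"
begin

lemma ax1: "p \<noteq> q \<Longrightarrow> \<exists>!l. inc p l \<and> inc q l"
  using pp unfolding projective_plane_def by blast
lemma ax2: "l \<noteq> m \<Longrightarrow> \<exists>!p. inc p l \<and> inc p m"
  using pp unfolding projective_plane_def by blast
lemma U: "\<lbrakk>p \<noteq> q; inc p l; inc q l; inc p m; inc q m\<rbrakk> \<Longrightarrow> l = m"
  using ax1 by blast
lemma join_inc: "p \<noteq> q \<Longrightarrow> inc p (join inc p q) \<and> inc q (join inc p q)"
  unfolding join_def by (rule theI') (rule ax1)
lemma join_eq: "\<lbrakk>p\<noteq>q; inc p l; inc q l\<rbrakk> \<Longrightarrow> join inc p q = l"
  using join_inc U by metis
lemma join_comm: "join inc p q = join inc q p"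
  unfolding join_def by (simp add: conj_commute)
lemma meet_inc: "l \<noteq> m \<Longrightarrow> inc (meet inc l m) l \<and> inc (meet inc l m) m"
  unfolding meet_def by (rule theI') (rule ax2)
lemma meet_eq: "\<lbrakk>l\<noteq>m; inc p l; inc p m\<rbrakk> \<Longrightarrow> meet inc l m = p"
  using meet_inc U by metis

lemma NI: "\<lbrakk>x \<noteq> y; inc x m; inc y m; inc y l; inc z l; \<not> inc z m\<rbrakk> \<Longrightarrow> \<not> inc x l"
  using U by blast

lemma fano_from_quad:
  assumes q: "quadrangle inc a b c d"
  and c1: "collinear inc a b e" and c2: "collinear inc c d e"
  and c3: "collinear inc a c f" and c4: "collinear inc b d f"
  and c5: "collinear inc a d g" and c6: "collinear inc b c g"
  and c7: "collinear inc e f g"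
  shows "has_fano inc"
proof -
  obtain lab where i1: "inc a lab" "inc b lab" "inc e lab" using c1 unfolding collinear_def by blast
  obtain lcd where i2: "inc c lcd" "inc d lcd" "inc e lcd" using c2 unfolding collinear_def by blast
  obtain lac where i3: "inc a lac" "inc c lac" "inc f lac" using c3 unfolding collinear_def by blast
  obtain lbd where i4: "inc b lbd" "inc d lbd" "inc f lbd" using c4 unfolding collinear_def by blast
  obtain lad where i5: "inc a lad" "inc d lad" "inc g lad" using c5 unfolding collinear_def by blast
  obtain lbc where i6: "inc b lbc" "inc c lbc" "inc g lbc" using c6 unfolding collinear_def by blast
  obtain h where i7: "inc e h" "inc f h" "inc g h" using c7 unfolding collinear_def by blast
  have d0: "a \<noteq> b" "a \<noteq> c" "a \<noteq> d" "b \<noteq> c" "b \<noteq> d" "c \<noteq> d"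
    using q unfolding quadrangle_def by auto
  have nc: "\<And>l. \<not> (inc a l \<and> inc b l \<and> inc c l)" "\<And>l. \<not> (inc a l \<and> inc b l \<and> inc d l)"
    "\<And>l. \<not> (inc a l \<and> inc c l \<and> inc d l)" "\<And>l. \<not> (inc b l \<and> inc c l \<and> inc d l)"
    using q unfolding quadrangle_def collinear_def by blast+
  have n1: "\<not> inc c lab" "\<not> inc d lab" "\<not> inc a lcd" "\<not> inc b lcd"
    "\<not> inc b lac" "\<not> inc d lac" "\<not> inc a lbd" "\<not> inc c lbd"
    "\<not> inc b lad" "\<not> inc c lad" "\<not> inc a lbc" "\<not> inc d lbc"
    using nc i1 i2 i3 i4 i5 i6 by blast+
  have d1: "e \<noteq> a" "e \<noteq> b" "e \<noteq> c" "e \<noteq> d" "f \<noteq> a" "f \<noteq> b" "f \<noteq> c" "f \<noteq> d"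
     "g \<noteq> a" "g \<noteq> b" "g \<noteq> c" "g \<noteq> d"
    using n1 i1 i2 i3 i4 i5 i6 by auto
  have n2: "\<not> inc f lab" "\<not> inc g lab" "\<not> inc f lcd" "\<not> inc g lcd"
    "\<not> inc e lac" "\<not> inc g lac" "\<not> inc e lbd" "\<not> inc g lbd"
    "\<not> inc e lad" "\<not> inc f lad" "\<not> inc e lbc" "\<not> inc f lbc"
    subgoal by (rule NI[of f a lac lab b]) (use i1 i3 n1 d1 in auto)
    subgoal by (rule NI[of g a lad lab b]) (use i1 i5 n1 d1 in auto)
    subgoal by (rule NI[of f d lbd lcd c]) (use i2 i4 n1 d1 in auto)
    subgoal by (rule NI[of g d lad lcd c]) (use i2 i5 n1 d1 in auto)
    subgoal by (rule NI[of e a lab lac c]) (use i1 i3 n1 d1 in auto)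
    subgoal by (rule NI[of g a lad lac c]) (use i3 i5 n1 d1 in auto)
    subgoal by (rule NI[of e b lab lbd d]) (use i1 i4 n1 d1 in auto)
    subgoal by (rule NI[of g b lbc lbd d]) (use i4 i6 n1 d1 in auto)
    subgoal by (rule NI[of e a lab lad d]) (use i1 i5 n1 d1 in auto)
    subgoal by (rule NI[of f a lac lad d]) (use i3 i5 n1 d1 in auto)
    subgoal by (rule NI[of e b lab lbc c]) (use i1 i6 n1 d1 in auto)
    subgoal by (rule NI[of f b lbd lbc c]) (use i4 i6 n1 d1 in auto)
    done
  have d2: "e \<noteq> f" "e \<noteq> g" "f \<noteq> g" using n2 i1 i2 i3 i4 i5 i6 by blast+
  have n3: "\<not> inc a h" "\<not> inc b h" "\<not> inc c h" "\<not> inc d h"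
    subgoal by (rule NI[of a e lab h f]) (use i1 i7 n2 d1 in auto)
    subgoal by (rule NI[of b e lab h f]) (use i1 i7 n2 d1 in auto)
    subgoal by (rule NI[of c e lcd h f]) (use i2 i7 n2 d1 in auto)
    subgoal by (rule NI[of d e lcd h f]) (use i2 i7 n2 d1 in auto)
    done
  have dl: "lab \<noteq> lcd" "lab \<noteq> lac" "lab \<noteq> lbd" "lab \<noteq> lad" "lab \<noteq> lbc" "lab \<noteq> h"
    "lcd \<noteq> lac" "lcd \<noteq> lbd" "lcd \<noteq> lad" "lcd \<noteq> lbc" "lcd \<noteq> h"
    "lac \<noteq> lbd" "lac \<noteq> lad" "lac \<noteq> lbc" "lac \<noteq> h"
    "lbd \<noteq> lad" "lbd \<noteq> lbc" "lbd \<noteq> h" "lad \<noteq> lbc" "lad \<noteq> h" "lbc \<noteq> h"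
    using n1 n2 n3 i1 i2 i3 i4 i5 i6 i7 by auto
  let ?S = "{a,b,c,d,e,f,g}"
  let ?T = "{lab,lcd,lac,lbd,lad,lbc,h}"
  have dd: "a \<noteq> b" "a \<noteq> c" "a \<noteq> d" "b \<noteq> c" "b \<noteq> d" "c \<noteq> d"
    "e \<noteq> a" "e \<noteq> b" "e \<noteq> c" "e \<noteq> d" "f \<noteq> a" "f \<noteq> b" "f \<noteq> c" "f \<noteq> d"
     "g \<noteq> a" "g \<noteq> b" "g \<noteq> c" "g \<noteq> d" "e \<noteq> f" "e \<noteq> g" "f \<noteq> g"
    using d0 d1 d2 by auto
  note ddd = dd dd[THEN not_sym]
  note dll = dl dl[THEN not_sym]
  have "card ?S = 7" using ddd by simp
  moreover have "card ?T = 7" using dll by simp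
  moreover have "\<forall>l\<in>?T. card {p\<in>?S. inc p l} = 3"
    unfolding filter_insert filter_empty using n1 n2 n3 i1 i2 i3 i4 i5 i6 i7 ddd by simp
  moreover have "\<forall>p\<in>?S. card {l\<in>?T. inc p l} = 3"
    unfolding filter_insert filter_empty using n1 n2 n3 i1 i2 i3 i4 i5 i6 i7 dll by simp
  ultimately show ?thesis unfolding has_fano_def by blast
qed


lemma third_pt:
  assumes "card A = 3" "a \<in> A" "e \<in> A" "a \<noteq> e"
  shows "\<exists>b. b \<in> A \<and> b \<noteq> a \<and> b \<noteq> e \<and> (\<forall>x\<in>A. x = a \<or> x = e \<or> x = b)"
  using assms unfolding card_3_iff by auto

lemma fano_pairs:
  assumes cS: "card S = 7" and cT: "card T = 7"
    and L3: "\<forall>l\<in>T. card {p\<in>S. inc p l} = 3" and P3: "\<forall>p\<in>S. card {l\<in>T. inc p l} = 3"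
    and pq: "p \<in> S" "q \<in> S" "p \<noteq> q"
  shows "\<exists>l\<in>T. inc p l \<and> inc q l"
proof -
  have fS: "finite S" using cS by (intro card_ge_0_finite) simp
  have fT: "finite T" using cT by (intro card_ge_0_finite) simp
  define Lp where "Lp = {l\<in>T. inc p l}"
  define A where "A l = {x\<in>S. inc x l} - {p}" for l
  have cA: "card (A l) = 2" if "l \<in> Lp" for l
  proof -
    have "p \<in> {x\<in>S. inc x l}" using that pq unfolding Lp_def by auto
    moreover have "card {x\<in>S. inc x l} = 3" using L3 that unfolding Lp_def by auto
    ultimately show ?thesis unfolding A_def using fS by (simp add: card_Diff_singleton)
  qed
  have disj: "\<forall>i\<in>Lp. \<forall>j\<in>Lp. i \<noteq> j \<longrightarrow> A i \<inter> A j = {}"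
    unfolding A_def Lp_def using U by blast
  have fin: "\<forall>i\<in>Lp. finite (A i)" unfolding A_def using fS by auto
  have fLp: "finite Lp" unfolding Lp_def using fT by auto
  have "card (\<Union>(A ` Lp)) = (\<Sum>i\<in>Lp. card (A i))"
    by (rule card_UN_disjoint[OF fLp fin disj])
  also have "\<dots> = (\<Sum>i\<in>Lp. 2)" using cA by (intro sum.cong) auto
  also have "\<dots> = 6" using P3 pq unfolding Lp_def by simp
  finally have c6: "card (\<Union>(A ` Lp)) = 6" .
  have sub: "\<Union>(A ` Lp) \<subseteq> S - {p}" unfolding A_def by auto
  have "card (S - {p}) = 6" using cS pq fS by (simp add: card_Diff_singleton)
  hence "\<Union>(A ` Lp) = S - {p}" using card_subset_eq[OF _ sub] fS c6 by auto
  hence "q \<in> \<Union>(A ` Lp)" using pq by auto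
  thus ?thesis unfolding A_def Lp_def by auto
qed


lemma quad_from_fano:
  assumes "has_fano inc"
  shows "\<exists>a b c d e f g. quadrangle inc a b c d \<and> collinear inc a b e \<and> collinear inc c d e
     \<and> collinear inc a c f \<and> collinear inc b d f \<and> collinear inc a d g \<and> collinear inc b c g
     \<and> collinear inc e f g"
proof -
  obtain S T where cS: "card S = 7" and cT: "card T = 7"
    and L3: "\<forall>l\<in>T. card {p\<in>S. inc p l} = 3" and P3: "\<forall>p\<in>S. card {l\<in>T. inc p l} = 3"
    using assms unfolding has_fano_def by blast
  have fS: "finite S" using cS by (intro card_ge_0_finite) simp
  have pair: "\<And>p q. p \<in> S \<Longrightarrow> q \<in> S \<Longrightarrow> p \<noteq> q \<Longrightarrow> \<exists>l\<in>T. inc p l \<and> inc q l"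
    using fano_pairs[OF cS cT L3 P3] by blast
  have thr: "\<And>m p q. m \<in> T \<Longrightarrow> p \<in> S \<Longrightarrow> q \<in> S \<Longrightarrow> p \<noteq> q \<Longrightarrow> inc p m \<Longrightarrow> inc q m \<Longrightarrow>
     \<exists>r. r \<in> S \<and> inc r m \<and> r \<noteq> p \<and> r \<noteq> q \<and> (\<forall>x\<in>S. inc x m \<longrightarrow> x = p \<or> x = q \<or> x = r)"
  proof -
    fix m p q assume h: "m \<in> T" "p \<in> S" "q \<in> S" "p \<noteq> q" "inc p m" "inc q m"
    have "card {x\<in>S. inc x m} = 3" using L3 h by auto
    from third_pt[OF this, of p q] h show "\<exists>r. r \<in> S \<and> inc r m \<and> r \<noteq> p \<and> r \<noteq> q \<and> (\<forall>x\<in>S. inc x m \<longrightarrow> x = p \<or> x = q \<or> x = r)"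
      by auto
  qed
  have "T \<noteq> {}" using cT by auto
  then obtain l where l: "l \<in> T" by auto
  have "card {p\<in>S. inc p l} = 3" using L3 l by auto
  then obtain e f g where efg: "{p\<in>S. inc p l} = {e,f,g}" "e \<noteq> f" "f \<noteq> g" "e \<noteq> g"
    unfolding card_3_iff by auto
  have eS: "e \<in> S" "f \<in> S" "g \<in> S" "inc e l" "inc f l" "inc g l" using efg(1) by blast+
  have onl: "\<forall>z\<in>S. inc z l \<longrightarrow> z = e \<or> z = f \<or> z = g" using efg(1) by blast
  have cQ: "card (S - {p\<in>S. inc p l}) = 4"
    using fS efg cS by (subst card_Diff_subset) auto
  hence "S - {p\<in>S. inc p l} \<noteq> {}" by (metis card.empty zero_neq_numeral)
  then obtain a where a: "a \<in> S" "\<not> inc a l" by auto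
  have "a \<noteq> e" "a \<noteq> f" "a \<noteq> g" using a eS by auto
  obtain me where me: "me \<in> T" "inc a me" "inc e me" using pair[of a e] a eS \<open>a \<noteq> e\<close> by auto
  obtain b where b: "b \<in> S" "inc b me" "b \<noteq> a" "b \<noteq> e" using thr[OF me(1) a(1) eS(1) \<open>a \<noteq> e\<close> me(2,3)] by auto
  obtain mf where mf: "mf \<in> T" "inc a mf" "inc f mf" using pair[of a f] a eS \<open>a \<noteq> f\<close> by auto
  obtain c where c: "c \<in> S" "inc c mf" "c \<noteq> a" "c \<noteq> f" using thr[OF mf(1) a(1) eS(2) \<open>a \<noteq> f\<close> mf(2,3)] by auto
  obtain mg where mg: "mg \<in> T" "inc a mg" "inc g mg" using pair[of a g] a eS \<open>a \<noteq> g\<close> by auto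
  obtain x where x: "x \<in> S" "inc x mg" "x \<noteq> a" "x \<noteq> g" using thr[OF mg(1) a(1) eS(3) \<open>a \<noteq> g\<close> mg(2,3)] by auto
  have bl: "\<not> inc b l" using U[of b e l me] b me eS a by auto
  have cl: "\<not> inc c l" using U[of c f l mf] c mf eS a by auto
  have xl: "\<not> inc x l" using U[of x g l mg] x mg eS a by auto
  have mef: "me \<noteq> mf" using U[of e f me l] me mf eS efg a by auto
  have meg: "me \<noteq> mg" using U[of e g me l] me mg eS efg a by auto
  have mfg: "mf \<noteq> mg" using U[of f g mf l] mf mg eS efg a by auto
  have cb: "c \<noteq> b" using U[of a b me mf] me mf b c mef by auto
  have xb: "x \<noteq> b" using U[of a b me mg] me mg b x meg by auto
  have xc: "x \<noteq> c" using U[of a c mf mg] mf mg c x mfg by auto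
  have Qeq: "\<forall>z\<in>S. \<not> inc z l \<longrightarrow> z = a \<or> z = b \<or> z = c \<or> z = x"
  proof -
    have sub: "{a,b,c,x} \<subseteq> S - {p\<in>S. inc p l}" using a b c x bl cl xl by auto
    have "card {a,b,c,x} = 4" using b c x cb xb xc by auto
    hence "{a,b,c,x} = S - {p\<in>S. inc p l}" using card_subset_eq[OF _ sub] fS cQ by auto
    thus ?thesis by auto
  qed
  have ce: "c \<noteq> e" using cl eS by auto
  obtain mce where mce: "mce \<in> T" "inc c mce" "inc e mce" using pair[of c e] c eS ce by auto
  obtain d1 where d1: "d1 \<in> S" "inc d1 mce" "d1 \<noteq> c" "d1 \<noteq> e" using thr[OF mce(1) c(1) eS(1) ce mce(2,3)] by auto
  have "\<not> inc d1 l" using U[of d1 e mce l] d1 mce eS cl by auto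
  moreover have "d1 \<noteq> a"
  proof
    assume "d1 = a"
    hence "mce = mf" using U[of a c mce mf] d1 mce mf c by auto
    thus False using U[of e f mf l] mce mf eS efg a by auto
  qed
  moreover have "d1 \<noteq> b"
  proof
    assume "d1 = b"
    hence "mce = me" using U[of b e mce me] d1 mce me b by auto
    thus False using U[of a c me mf] mce me mf c mef by auto
  qed
  ultimately have xce: "inc x mce" using Qeq d1 by metis
  have bf: "b \<noteq> f" using bl eS by auto
  obtain mbf where mbf: "mbf \<in> T" "inc b mbf" "inc f mbf" using pair[of b f] b eS bf by auto
  obtain d2 where d2: "d2 \<in> S" "inc d2 mbf" "d2 \<noteq> b" "d2 \<noteq> f" using thr[OF mbf(1) b(1) eS(2) bf mbf(2,3)] by auto
  have "\<not> inc d2 l" using U[of d2 f mbf l] d2 mbf eS bl by auto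
  moreover have "d2 \<noteq> a"
  proof
    assume "d2 = a"
    hence "mbf = me" using U[of a b mbf me] d2 mbf me b by auto
    thus False using U[of e f me l] mbf me eS efg a by auto
  qed
  moreover have "d2 \<noteq> c"
  proof
    assume "d2 = c"
    hence "mbf = mf" using U[of c f mbf mf] d2 mbf mf c by auto
    thus False using U[of a b me mf] mbf me mf b mef by auto
  qed
  ultimately have xbf: "inc x mbf" using Qeq d2 by metis
  obtain mbc where mbc: "mbc \<in> T" "inc b mbc" "inc c mbc" using pair[of b c] b c cb by auto
  obtain y where y: "y \<in> S" "inc y mbc" "y \<noteq> b" "y \<noteq> c" using thr[OF mbc(1) b(1) c(1) cb[symmetric] mbc(2,3)] by auto
  have "y \<noteq> a"
  proof
    assume "y = a"
    hence "mbc = me" using U[of a b mbc me] y mbc me b by auto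
    thus False using U[of a c me mf] mbc me mf c mef by auto
  qed
  moreover have "y \<noteq> x"
  proof
    assume "y = x"
    hence "mbc = mbf" using U[of b x mbc mbf] y mbc mbf xb xbf by auto
    hence "mbf = mf" using U[of c f mbf mf] mbc mbf mf c by auto
    thus False using U[of a b me mf] mbf me mf b mef by auto
  qed
  ultimately have "inc y l" using Qeq y by metis
  hence "y = e \<or> y = f \<or> y = g" using onl y by auto
  moreover have "y \<noteq> e"
  proof
    assume "y = e"
    hence "mbc = me" using U[of b e mbc me] y mbc me b by auto
    thus False using U[of a c me mf] mbc me mf c mef by auto
  qed
  moreover have "y \<noteq> f"
  proof
    assume "y = f"
    hence "mbc = mf" using U[of c f mbc mf] y mbc mf c by auto
    thus False using U[of a b me mf] mbc me mf b mef by auto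
  qed
  ultimately have gbc: "inc g mbc" using y by auto
  have q1: "\<not> collinear inc a b c"
  proof
    assume "collinear inc a b c"
    then obtain L where "inc a L" "inc b L" "inc c L" unfolding collinear_def by auto
    hence "L = me" using U[of a b L me] me b by auto
    thus False using U[of a c me mf] \<open>inc c L\<close> me mf c mef by auto
  qed
  have q2: "\<not> collinear inc a b x"
  proof
    assume "collinear inc a b x"
    then obtain L where "inc a L" "inc b L" "inc x L" unfolding collinear_def by auto
    hence "L = me" using U[of a b L me] me b by auto
    thus False using U[of a x me mg] \<open>inc x L\<close> me mg x meg by auto
  qed
  have q3: "\<not> collinear inc a c x"
  proof
    assume "collinear inc a c x"
    then obtain L where "inc a L" "inc c L" "inc x L" unfolding collinear_def by auto
    hence "L = mf" using U[of a c L mf] mf c by auto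
    thus False using U[of a x mf mg] \<open>inc x L\<close> mf mg x mfg by auto
  qed
  have q4: "\<not> collinear inc b c x"
  proof
    assume "collinear inc b c x"
    then obtain L where "inc b L" "inc c L" "inc x L" unfolding collinear_def by auto
    hence "L = mbf" using U[of b x L mbf] mbf xbf xb by auto
    hence "mbf = mf" using U[of c f mbf mf] \<open>inc c L\<close> mbf mf c by auto
    thus False using U[of a b me mf] mbf me mf b mef by auto
  qed
  have "quadrangle inc a b c x"
    unfolding quadrangle_def using q1 q2 q3 q4 b c x cb xb xc by auto
  moreover have "collinear inc a b e" "collinear inc c x e" "collinear inc a c f" "collinear inc b x f"
    "collinear inc a x g" "collinear inc b c g" "collinear inc e f g"
    unfolding collinear_def using me b mce xce mf c mbf xbf mg x mbc gbc eS by blast+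
  ultimately show ?thesis by blast
qed

lemma coord_from_quad:
  assumes ord: "projective_plane_of_order inc n"
  and q: "quadrangle inc a b c d"
  and c1: "collinear inc a b e" and c2: "collinear inc c d e"
  and c3: "collinear inc a c f" and c4: "collinear inc b d f"
  and c5: "collinear inc a d g" and c6: "collinear inc b c g"
  and c7: "collinear inc e f g"
  shows "\<exists>(R :: nat set) zero one Or X Y E lam.
        card R = n \<and> coordinatisation inc R zero one Or X Y E lam \<and>
        (\<exists>t\<in>R. t \<noteq> zero \<and> coord_add inc R one Or X Y E lam t t = zero)"
proof -
  obtain lab where i1: "inc a lab" "inc b lab" "inc e lab" using c1 unfolding collinear_def by blast
  obtain lcd where i2: "inc c lcd" "inc d lcd" "inc e lcd" using c2 unfolding collinear_def by blast
  obtain lac where i3: "inc a lac" "inc c lac" "inc f lac" using c3 unfolding collinear_def by blast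
  obtain lbd where i4: "inc b lbd" "inc d lbd" "inc f lbd" using c4 unfolding collinear_def by blast
  obtain lad where i5: "inc a lad" "inc d lad" "inc g lad" using c5 unfolding collinear_def by blast
  obtain lbc where i6: "inc b lbc" "inc c lbc" "inc g lbc" using c6 unfolding collinear_def by blast
  obtain h where i7: "inc e h" "inc f h" "inc g h" using c7 unfolding collinear_def by blast
  have d0: "a \<noteq> b" "a \<noteq> c" "a \<noteq> d" "b \<noteq> c" "b \<noteq> d" "c \<noteq> d"
    using q unfolding quadrangle_def by auto
  have nc: "\<And>l. \<not> (inc a l \<and> inc b l \<and> inc c l)" "\<And>l. \<not> (inc a l \<and> inc b l \<and> inc d l)"
    "\<And>l. \<not> (inc a l \<and> inc c l \<and> inc d l)" "\<And>l. \<not> (inc b l \<and> inc c l \<and> inc d l)"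
    using q unfolding quadrangle_def collinear_def by blast+
  have n1: "\<not> inc c lab" "\<not> inc d lab" "\<not> inc a lcd" "\<not> inc b lcd"
    "\<not> inc b lac" "\<not> inc d lac" "\<not> inc a lbd" "\<not> inc c lbd"
    "\<not> inc b lad" "\<not> inc c lad" "\<not> inc a lbc" "\<not> inc d lbc"
    using nc i1 i2 i3 i4 i5 i6 by blast+
  have d1: "e \<noteq> a" "e \<noteq> b" "e \<noteq> c" "e \<noteq> d" "f \<noteq> a" "f \<noteq> b" "f \<noteq> c" "f \<noteq> d"
     "g \<noteq> a" "g \<noteq> b" "g \<noteq> c" "g \<noteq> d"
    using n1 i1 i2 i3 i4 i5 i6 by auto
  have n2: "\<not> inc f lab" "\<not> inc g lab" "\<not> inc f lcd" "\<not> inc g lcd"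
    "\<not> inc e lac" "\<not> inc g lac" "\<not> inc e lbd" "\<not> inc g lbd"
    "\<not> inc e lad" "\<not> inc f lad" "\<not> inc e lbc" "\<not> inc f lbc"
    subgoal by (rule NI[of f a lac lab b]) (use i1 i3 n1 d1 in auto)
    subgoal by (rule NI[of g a lad lab b]) (use i1 i5 n1 d1 in auto)
    subgoal by (rule NI[of f d lbd lcd c]) (use i2 i4 n1 d1 in auto)
    subgoal by (rule NI[of g d lad lcd c]) (use i2 i5 n1 d1 in auto)
    subgoal by (rule NI[of e a lab lac c]) (use i1 i3 n1 d1 in auto)
    subgoal by (rule NI[of g a lad lac c]) (use i3 i5 n1 d1 in auto)
    subgoal by (rule NI[of e b lab lbd d]) (use i1 i4 n1 d1 in auto)
    subgoal by (rule NI[of g b lbc lbd d]) (use i4 i6 n1 d1 in auto)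
    subgoal by (rule NI[of e a lab lad d]) (use i1 i5 n1 d1 in auto)
    subgoal by (rule NI[of f a lac lad d]) (use i3 i5 n1 d1 in auto)
    subgoal by (rule NI[of e b lab lbc c]) (use i1 i6 n1 d1 in auto)
    subgoal by (rule NI[of f b lbd lbc c]) (use i4 i6 n1 d1 in auto)
    done
  have d2: "e \<noteq> f" "e \<noteq> g" "f \<noteq> g" using n2 i1 i2 i3 i4 i5 i6 by blast+
  have n3: "\<not> inc a h" "\<not> inc b h" "\<not> inc c h" "\<not> inc d h"
    subgoal by (rule NI[of a e lab h f]) (use i1 i7 n2 d1 in auto)
    subgoal by (rule NI[of b e lab h f]) (use i1 i7 n2 d1 in auto)
    subgoal by (rule NI[of c e lcd h f]) (use i2 i7 n2 d1 in auto)
    subgoal by (rule NI[of d e lcd h f]) (use i2 i7 n2 d1 in auto)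
    done
  have dl: "lab \<noteq> lcd" "lab \<noteq> lac" "lab \<noteq> lbd" "lab \<noteq> lad" "lab \<noteq> lbc" "lab \<noteq> h"
    "lcd \<noteq> lac" "lcd \<noteq> lbd" "lcd \<noteq> lad" "lcd \<noteq> lbc" "lcd \<noteq> h"
    "lac \<noteq> lbd" "lac \<noteq> lad" "lac \<noteq> lbc" "lac \<noteq> h"
    "lbd \<noteq> lad" "lbd \<noteq> lbc" "lbd \<noteq> h" "lad \<noteq> lbc" "lad \<noteq> h" "lbc \<noteq> h"
    using n1 n2 n3 i1 i2 i3 i4 i5 i6 i7 by auto

  have jac: "join inc a c = lac" using join_eq d0 i3 by auto
  have jbd: "join inc b d = lbd" using join_eq d0 i4 by auto
  have jcd: "join inc c d = lcd" using join_eq d0 i2 by auto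
  have jab: "join inc a b = lab" using join_eq d0 i1 by auto
  have jbc: "join inc b c = lbc" using join_eq d0 i6 by auto
  have jef: "join inc e f = h" using join_eq d2 i7 by auto
  have jfe: "join inc f e = h" using join_eq d2 i7 by auto
  have jfg: "join inc f g = h" using join_eq d2 i7 by auto
  have jec: "join inc e c = lcd" using join_eq d1 i2 by auto
  have jfb: "join inc f b = lbd" using join_eq d1 i4 by auto
  have jga: "join inc g a = lad" using join_eq d1 i5 by auto
  have m1: "meet inc lbd lac = f" using meet_eq dl i3 i4 by auto
  have m2: "meet inc lcd lab = e" using meet_eq dl i1 i2 by auto
  have m3: "meet inc h lbc = g" using meet_eq dl i6 i7 by auto
  have m4: "meet inc h lab = e" using meet_eq dl i1 i7 by auto
  have m5: "meet inc lcd lbd = d" using meet_eq dl i2 i4 by auto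
  define Pts where "Pts = {p. inc p lac} - {c}"
  have cl: "card {p. inc p lac} = n + 1" using ord unfolding projective_plane_of_order_def by auto
  hence fl: "finite {p. inc p lac}" by (intro card_ge_0_finite) simp
  have cP: "card Pts = n" unfolding Pts_def using cl fl i3 by (simp add: card_Diff_singleton)
  have fP: "finite Pts" unfolding Pts_def using fl by auto
  have aP: "a \<in> Pts" "f \<in> Pts" unfolding Pts_def using i3 d0 d1 by auto
  obtain lam where lam: "bij_betw lam {0..<n} Pts" "lam 0 = a" "lam (1::nat) = f"
    using exists_lam[OF fP cP aP] d1 by auto
  have n2: "n \<ge> 2" using cP aP fP d1
    by (metis card_2_iff card_mono empty_subsetI insert_subset)
  define R where "R = {0..<n::nat}"
  have coord: "coordinatisation inc R 0 1 a b c d lam"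
    unfolding coordinatisation_def R_def Pts_def using q n2 lam jac jbd m1 Pts_def by auto
  have p10: "pt10 inc a b c d = e" unfolding pt10_def using jcd jab m2 by simp
  have pJ: "ptJ inc 1 a b c d lam = g" unfolding ptJ_def using p10 lam jef jbc m3 by simp
  have pM: "ptM inc a b c d lam 1 = g" unfolding ptM_def using p10 lam jfe jbc m3 by simp
  have pA: "ptA0 inc 1 a b c d lam 1 = e" unfolding ptA0_def using pJ lam jfg jab m4 by simp
  have pAB: "ptAB inc 1 a b c d lam 1 1 = d" unfolding ptAB_def using pA lam jec jfb m5 by simp
  have gl: "\<not> inc g lac" using U[of g c lac lbc] i3 i6 d1 n1 by auto
  have "coord_add inc R 1 a b c d lam 1 1 = 0"
    unfolding coord_add_def PTR_def lineMK_def pAB pM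
  proof (rule the_equality)
    show "0 \<in> R \<and> inc d (join inc g (lam 0))" using n2 R_def lam jga i5 by auto
  next
    fix k assume k: "k \<in> R \<and> inc d (join inc g (lam k))"
    have lk: "inc (lam k) lac" "lam k \<noteq> c" using k lam(1) unfolding R_def bij_betw_def Pts_def by auto
    have gk: "g \<noteq> lam k" using lk gl by auto
    have "join inc g (lam k) = lad" using U[of g d "join inc g (lam k)" lad] join_inc[OF gk] k i5 d1 by auto
    hence "inc (lam k) lad" using join_inc[OF gk] by auto
    hence "lam k = a" using U[of "lam k" a lad lac] lk i3 i5 dl by auto
    hence "lam k = lam 0" using lam by simp
    thus "k = 0" using lam(1) k n2 unfolding bij_betw_def inj_on_def R_def by auto
  qed
  moreover have "card R = n" unfolding R_def by simp
  moreover have "(1::nat) \<in> R" "(1::nat) \<noteq> 0" using n2 R_def by auto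
  ultimately show ?thesis using coord by blast
qed

lemma quad_from_coord:
  assumes coord: "coordinatisation inc R zero one Oo X Y E lam"
  and t: "t \<in> R" "t \<noteq> zero" and ad: "coord_add inc R one Oo X Y E lam t t = zero"
  shows "\<exists>a b c d e f g. quadrangle inc a b c d \<and> collinear inc a b e \<and> collinear inc c d e
     \<and> collinear inc a c f \<and> collinear inc b d f \<and> collinear inc a d g \<and> collinear inc b c g
     \<and> collinear inc e f g"
proof -
  have q: "quadrangle inc Oo X Y E" and zR: "zero \<in> R"
    and bij: "bij_betw lam R ({p. inc p (join inc Oo Y)} - {Y})"
    and l0: "lam zero = Oo" and l1: "lam one = meet inc (join inc X E) (join inc Oo Y)"
    using coord unfolding coordinatisation_def by auto
  have d0: "Oo \<noteq> X" "Oo \<noteq> Y" "Oo \<noteq> E" "X \<noteq> Y" "X \<noteq> E" "Y \<noteq> E"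
    using q unfolding quadrangle_def by auto
  have nc: "\<And>l. \<not> (inc Oo l \<and> inc X l \<and> inc Y l)" "\<And>l. \<not> (inc Oo l \<and> inc X l \<and> inc E l)"
    "\<And>l. \<not> (inc Oo l \<and> inc Y l \<and> inc E l)" "\<And>l. \<not> (inc X l \<and> inc Y l \<and> inc E l)"
    using q unfolding quadrangle_def collinear_def by blast+
  define LOX where "LOX = join inc Oo X"
  define LOY where "LOY = join inc Oo Y"
  define LXY where "LXY = join inc X Y"
  define LXE where "LXE = join inc X E"
  define LYE where "LYE = join inc Y E"
  have iOX: "inc Oo LOX" "inc X LOX" unfolding LOX_def using join_inc d0 by auto
  have iOY: "inc Oo LOY" "inc Y LOY" unfolding LOY_def using join_inc d0 by auto
  have iXY: "inc X LXY" "inc Y LXY" unfolding LXY_def using join_inc d0 by auto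
  have iXE: "inc X LXE" "inc E LXE" unfolding LXE_def using join_inc d0 by auto
  have iYE: "inc Y LYE" "inc E LYE" unfolding LYE_def using join_inc d0 by auto
  have nl: "\<not> inc Y LOX" "\<not> inc X LOY" "\<not> inc Oo LXY" "\<not> inc Oo LXE" "\<not> inc Y LXE"
    "\<not> inc Oo LYE" "\<not> inc X LYE" "\<not> inc E LOY" "\<not> inc E LOX" "\<not> inc E LXY"
    using nc iOX iOY iXY iXE iYE by blast+
  have dl: "LXE \<noteq> LOY" "LYE \<noteq> LOX" "LOX \<noteq> LOY" "LOX \<noteq> LXY" "LOY \<noteq> LXY" "LYE \<noteq> LXE"
    using nl iOX iOY iXY iXE iYE by auto
  define P01 where "P01 = lam one"
  have iP01: "inc P01 LXE" "inc P01 LOY" unfolding P01_def l1 LXE_def[symmetric] LOY_def[symmetric]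
    using meet_inc dl by auto
  define P10 where "P10 = pt10 inc Oo X Y E"
  have iP10: "inc P10 LYE" "inc P10 LOX" unfolding P10_def pt10_def LYE_def[symmetric] LOX_def[symmetric]
    using meet_inc dl by auto
  have dP: "P01 \<noteq> Y" "P01 \<noteq> Oo" "P01 \<noteq> E" "P10 \<noteq> X" "P10 \<noteq> Oo" "P10 \<noteq> Y"
    using iP01 iP10 nl by auto
  have dP2: "P10 \<noteq> P01" using U[of Oo P10 LOX LOY] iP01 iP10 iOX iOY dP dl by auto
  define LJ where "LJ = join inc P10 P01"
  have iLJ: "inc P10 LJ" "inc P01 LJ" unfolding LJ_def using join_inc dP2 by auto
  have LJne: "LJ \<noteq> LXY" using U[of P10 X LOX LXY] iLJ iP10 iOX iXY dP dl by auto
  define J where "J = meet inc LJ LXY"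
  have iJ: "inc J LJ" "inc J LXY" unfolding J_def using meet_inc LJne by auto
  have JY: "J \<noteq> Y"
  proof
    assume "J = Y"
    hence "LJ = LYE" using U[of Y P10 LJ LYE] iJ iLJ iYE iP10 dP by auto
    hence "P01 = E" using U[of P01 E LYE LXE] iLJ iYE iXE iP01 dl by auto
    thus False using dP by auto
  qed
  have JX: "J \<noteq> X"
  proof
    assume "J = X"
    hence "LJ = LOX" using U[of X P10 LJ LOX] iJ iLJ iOX iP10 dP by auto
    hence "P01 = Oo" using U[of P01 Oo LOX LOY] iLJ iOX iOY iP01 dl by auto
    thus False using dP by auto
  qed
  have JOY: "\<not> inc J LOY" using U[of J Y LOY LXY] iJ iOY iXY JY dl by auto
  have JOX: "\<not> inc J LOX" using U[of J X LOX LXY] iJ iOX iXY JX dl by auto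
  have pJ: "ptJ inc one Oo X Y E lam = J" unfolding ptJ_def J_def LJ_def P10_def P01_def LXY_def ..
  have pM: "ptM inc Oo X Y E lam one = J" unfolding ptM_def J_def LJ_def P10_def P01_def LXY_def
    by (simp add: join_comm)
  define B where "B = lam t"
  have Bpts: "inc B LOY" "B \<noteq> Y" using bij t unfolding B_def bij_betw_def LOY_def by auto
  have BO: "B \<noteq> Oo" using bij t zR l0 unfolding B_def bij_betw_def inj_on_def by metis
  have BJ: "B \<noteq> J" using Bpts JOY by auto
  define LBJ where "LBJ = join inc B J"
  have iLBJ: "inc B LBJ" "inc J LBJ" unfolding LBJ_def using join_inc BJ by auto
  have LBJne: "LBJ \<noteq> LOX" using iLBJ JOX by auto
  define A where "A = meet inc LBJ LOX"
  have iA: "inc A LBJ" "inc A LOX" unfolding A_def using meet_inc LBJne by auto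
  have AO: "A \<noteq> Oo"
  proof
    assume "A = Oo"
    hence "LBJ = LOY" using U[of Oo B LBJ LOY] iA iLBJ iOY Bpts BO by auto
    thus False using iLBJ JOY by auto
  qed
  have AX: "A \<noteq> X"
  proof
    assume "A = X"
    hence "LBJ = LXY" using U[of X J LBJ LXY] iA iLBJ iXY iJ JX by auto
    hence "B = Y" using U[of B Y LOY LXY] iLBJ iOY iXY Bpts dl by auto
    thus False using Bpts by auto
  qed
  have AXY: "\<not> inc A LXY" using U[of A X LOX LXY] iA iOX iXY AX dl by auto
  have AY: "A \<noteq> Y" using iA nl by auto
  have BX: "B \<noteq> X" using Bpts nl by auto
  have pA: "ptA0 inc one Oo X Y E lam t = A" unfolding ptA0_def pJ A_def LBJ_def B_def LOX_def ..
  define LAY where "LAY = join inc A Y"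
  define LBX where "LBX = join inc B X"
  have iLAY: "inc A LAY" "inc Y LAY" unfolding LAY_def using join_inc AY by auto
  have iLBX: "inc B LBX" "inc X LBX" unfolding LBX_def using join_inc BX by auto
  have YBX: "\<not> inc Y LBX"
  proof
    assume "inc Y LBX"
    hence "LBX = LOY" using U[of B Y LBX LOY] iLBX iOY Bpts by auto
    thus False using iLBX nl by auto
  qed
  have LAYne: "LAY \<noteq> LBX" using iLAY YBX by auto
  define P where "P = meet inc LAY LBX"
  have iP: "inc P LAY" "inc P LBX" unfolding P_def using meet_inc LAYne by auto
  have pAB: "ptAB inc one Oo X Y E lam t t = P" unfolding ptAB_def pA P_def LAY_def LBX_def B_def ..
  have PXY: "\<not> inc P LXY"
  proof
    assume "inc P LXY"
    hence "P = Y" using U[of P Y LAY LXY] iP iLAY iXY AXY by auto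
    thus False using iP YBX by auto
  qed
  have POX: "\<not> inc P LOX"
  proof
    assume "inc P LOX"
    hence "P = A" using U[of P A LAY LOX] iP iLAY iA nl by auto
    hence "LBX = LOX" using U[of A X LBX LOX] iP iLBX iA iOX AX by auto
    hence "B = Oo" using U[of B Oo LOX LOY] iLBX iOX iOY Bpts dl by auto
    thus False using BO by auto
  qed
  have POY: "\<not> inc P LOY"
  proof
    assume "inc P LOY"
    hence "P = B" using U[of P B LBX LOY] iP iLBX Bpts nl by auto
    hence "LAY = LOY" using U[of B Y LAY LOY] iP iLAY Bpts iOY by auto
    hence "A = Oo" using U[of A Oo LOX LOY] iLAY iOX iOY iA dl by auto
    thus False using AO by auto
  qed
  have JP: "J \<noteq> P" using iJ PXY by auto
  define LJP where "LJP = join inc J P"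
  have iLJP: "inc J LJP" "inc P LJP" unfolding LJP_def using join_inc JP by auto
  have LJPne: "LJP \<noteq> LOY" using iLJP JOY by auto
  define Q where "Q = meet inc LJP LOY"
  have iQ: "inc Q LJP" "inc Q LOY" unfolding Q_def using meet_inc LJPne by auto
  have QY: "Q \<noteq> Y"
  proof
    assume "Q = Y"
    hence "LJP = LXY" using U[of J Y LJP LXY] iQ iLJP iJ iXY JY by auto
    thus False using iLJP PXY by auto
  qed
  have "Q \<in> lam ` R" using bij iQ QY unfolding bij_betw_def LOY_def by auto
  then obtain k0 where k0: "k0 \<in> R" "lam k0 = Q" by auto
  have "(THE k. k \<in> R \<and> inc P (join inc J (lam k))) = k0"
  proof (rule the_equality)
    have "J \<noteq> Q" using iQ JOY by auto
    hence "join inc J Q = LJP" using join_eq iLJP iQ by auto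
    thus "k0 \<in> R \<and> inc P (join inc J (lam k0))" using k0 iLJP by auto
  next
    fix k assume k: "k \<in> R \<and> inc P (join inc J (lam k))"
    have lk: "inc (lam k) LOY" "lam k \<noteq> Y" using k bij unfolding bij_betw_def LOY_def by auto
    have Jk: "J \<noteq> lam k" using lk JOY by auto
    have "join inc J (lam k) = LJP" using U[of J P "join inc J (lam k)" LJP] join_inc[OF Jk] k iLJP JP by auto
    hence "inc (lam k) LJP" using join_inc[OF Jk] by auto
    hence "lam k = Q" using U[of "lam k" Q LJP LOY] lk iQ LJPne by auto
    thus "k = k0" using k0 k bij unfolding bij_betw_def inj_on_def by metis
  qed
  hence "k0 = zero" using ad unfolding coord_add_def PTR_def lineMK_def pM pAB by simp
  hence iOJP: "inc Oo LJP" using k0 l0 iQ by auto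
  have k1: "\<not> (inc Oo l \<and> inc X l \<and> inc P l)" for l
    using U[of Oo X l LOX] d0 iOX POX by auto
  have k2: "\<not> (inc Oo l \<and> inc Y l \<and> inc P l)" for l
    using U[of Oo Y l LOY] d0 iOY POY by auto
  have k3: "\<not> (inc X l \<and> inc Y l \<and> inc P l)" for l
    using U[of X Y l LXY] d0 iXY PXY by auto
  have "P \<noteq> Oo" "P \<noteq> X" "P \<noteq> Y" using POX POY iOX iOY by auto
  hence "quadrangle inc Oo X Y P"
    unfolding quadrangle_def collinear_def
    using d0 nc(1) k1 k2 k3 by blast
  moreover have "collinear inc Oo X A" "collinear inc Y P A" "collinear inc Oo Y B"
    "collinear inc X P B" "collinear inc Oo P J" "collinear inc X Y J" "collinear inc A B J"
    unfolding collinear_def using iOX iA iLAY iP iOY Bpts iLBX iOJP iLJP iXY iJ iLBJ by blast+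
  ultimately show ?thesis by blast
qed
end

theorem theorem2p2:
  fixes inc :: "'p \<Rightarrow> 'l \<Rightarrow> bool" and n :: nat
  assumes "projective_plane_of_order inc n"
  shows "has_fano inc \<longleftrightarrow>
    (\<exists>(R :: nat set) zero one Or X Y E lam.
        card R = n \<and> coordinatisation inc R zero one Or X Y E lam \<and>
        (\<exists>t\<in>R. t \<noteq> zero \<and> coord_add inc R one Or X Y E lam t t = zero))"
proof -
  interpret pplane inc using assms unfolding projective_plane_of_order_def pplane_def by auto
  show ?thesis
  proof
    assume "has_fano inc"
    then obtain a b c d e f g where "quadrangle inc a b c d \<and> collinear inc a b e \<and> collinear inc c d e
     \<and> collinear inc a c f \<and> collinear inc b d f \<and> collinear inc a d g \<and> collinear inc b c g
     \<and> collinear inc e f g" using quad_from_fano by blast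
    thus "\<exists>(R :: nat set) zero one Or X Y E lam.
        card R = n \<and> coordinatisation inc R zero one Or X Y E lam \<and>
        (\<exists>t\<in>R. t \<noteq> zero \<and> coord_add inc R one Or X Y E lam t t = zero)"
      using coord_from_quad[OF assms] by blast
  next
    assume "\<exists>(R :: nat set) zero one Or X Y E lam.
        card R = n \<and> coordinatisation inc R zero one Or X Y E lam \<and>
        (\<exists>t\<in>R. t \<noteq> zero \<and> coord_add inc R one Or X Y E lam t t = zero)"
    then obtain R zero one Or X Y E lam t where "coordinatisation inc (R::nat set) zero one Or X Y E lam"
      "t \<in> R" "t \<noteq> zero" "coord_add inc R one Or X Y E lam t t = zero" by blast
    from quad_from_coord[OF this] obtain a b c d e f g where "quadrangle inc a b c d \<and> collinear inc a b e \<and> collinear inc c d e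
     \<and> collinear inc a c f \<and> collinear inc b d f \<and> collinear inc a d g \<and> collinear inc b c g
     \<and> collinear inc e f g" by blast
    thus "has_fano inc" using fano_from_quad by blast
  qed
qed

end
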